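(* Let $G=(V,E)$ be a graph (a starting position of the Maker-Breaker domination game) with minimum degree $\delta$. If $|V|<2^{\delta}$, then Dominator has a winning strategy for the Maker-Breaker domination game on $G$ when playing second.
   Context: The Maker-Breaker domination game on a finite graph $G=(V,E)$: two players, Dominator and Staller, alternately choose a not-yet-chosen vertex of $G$ (without passing), starting with all vertices unchosen. When all vertices have been chosen, Dominator wins if the set of vertices he chose is a dominating set of $G$; otherwise (some vertex has its whole closed neighborhood chosen by Staller) Staller wins. *)

theory Defs
  imports Main
begin

definition simple_graph :: "'a set \<Rightarrow> ('a \<Rightarrow> 'a \<Rightarrow> bool) \<Rightarrow> bool" where
  "simple_graph V E \<longleftrightarrow> finite V \<and> (\<forall>u v. E u v \<longrightarrow> u \<in> V \<and> v \<in> V)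
     \<and> (\<forall>u v. E u v \<longrightarrow> E v u) \<and> (\<forall>v. \<not> E v v)"

definition nbhd :: "'a set \<Rightarrow> ('a \<Rightarrow> 'a \<Rightarrow> bool) \<Rightarrow> 'a \<Rightarrow> 'a set" where
  "nbhd V E v = {u \<in> V. E v u}"

definition closed_nbhd :: "'a set \<Rightarrow> ('a \<Rightarrow> 'a \<Rightarrow> bool) \<Rightarrow> 'a \<Rightarrow> 'a set" where
  "closed_nbhd V E v = insert v (nbhd V E v)"

definition degree :: "'a set \<Rightarrow> ('a \<Rightarrow> 'a \<Rightarrow> bool) \<Rightarrow> 'a \<Rightarrow> nat" where
  "degree V E v = card (nbhd V E v)"

definition min_degree :: "'a set \<Rightarrow> ('a \<Rightarrow> 'a \<Rightarrow> bool) \<Rightarrow> nat" where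
  "min_degree V E = Min (degree V E ` V)"

definition dominating :: "'a set \<Rightarrow> ('a \<Rightarrow> 'a \<Rightarrow> bool) \<Rightarrow> 'a set \<Rightarrow> bool" where
  "dominating V E D \<longleftrightarrow> D \<subseteq> V \<and> (\<forall>v \<in> V. closed_nbhd V E v \<inter> D \<noteq> {})"

datatype player = Dominator | Staller

text \<open>A position consists of the set D of vertices
chosen by Dominator, the set S chosen by Staller, and the player to move.
\<open>dom_wins V E D S p\<close> holds iff Dominator has a winning strategy from this
position (least fixed point = winning within the finite game tree).\<close>
inductive dom_wins :: "'a set \<Rightarrow> ('a \<Rightarrow> 'a \<Rightarrow> bool) \<Rightarrow> 'a set \<Rightarrow> 'a set \<Rightarrow> player \<Rightarrow> bool"
  for V E where
  finished: "D \<union> S = V \<Longrightarrow> dominating V E D \<Longrightarrow> dom_wins V E D S p"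
| dom_move: "v \<in> V - (D \<union> S) \<Longrightarrow> dom_wins V E (insert v D) S Staller
     \<Longrightarrow> dom_wins V E D S Dominator"
| staller_move: "V - (D \<union> S) \<noteq> {} \<Longrightarrow>
     (\<forall>v \<in> V - (D \<union> S). dom_wins V E D (insert v S) Dominator)
     \<Longrightarrow> dom_wins V E D S Staller"

definition dominator_wins_second :: "'a set \<Rightarrow> ('a \<Rightarrow> 'a \<Rightarrow> bool) \<Rightarrow> bool" where
  "dominator_wins_second V E \<longleftrightarrow> dom_wins V E {} {} Staller"

end

theory Submission
  imports Defs Complex_Main
begin

definition wt :: "'a set \<Rightarrow> ('a \<Rightarrow> 'a \<Rightarrow> bool) \<Rightarrow> 'a set \<Rightarrow> 'a set \<Rightarrow> 'a \<Rightarrow> real" where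
  "wt V E D S v = (if closed_nbhd V E v \<inter> D = {} then (1/2::real) ^ card (closed_nbhd V E v - S) else 0)"

definition pot :: "'a set \<Rightarrow> ('a \<Rightarrow> 'a \<Rightarrow> bool) \<Rightarrow> 'a set \<Rightarrow> 'a set \<Rightarrow> real" where
  "pot V E D S = (\<Sum>v\<in>V. wt V E D S v)"

definition gain :: "'a set \<Rightarrow> ('a \<Rightarrow> 'a \<Rightarrow> bool) \<Rightarrow> 'a set \<Rightarrow> 'a set \<Rightarrow> 'a \<Rightarrow> real" where
  "gain V E D S y = (\<Sum>v\<in>V. if y \<in> closed_nbhd V E v then wt V E D S v else 0)"

lemma wt_nonneg: "wt V E D S v \<ge> 0"
  by (simp add: wt_def)

lemma gain_nonneg: "gain V E D S y \<ge> 0"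
  unfolding gain_def by (rule sum_nonneg) (simp add: wt_nonneg)

lemma cn_sub: "v \<in> V \<Longrightarrow> closed_nbhd V E v \<subseteq> V"
  by (auto simp: closed_nbhd_def nbhd_def)

lemma cn_fin: "finite V \<Longrightarrow> finite (closed_nbhd V E v)"
  by (auto simp: closed_nbhd_def nbhd_def)

lemma wt_dom: "wt V E (insert y D) S v = wt V E D S v - (if y \<in> closed_nbhd V E v then wt V E D S v else 0)"
  by (auto simp: wt_def)

lemma wt_dom_le: "wt V E (insert y D) S v \<le> wt V E D S v"
  by (auto simp: wt_def)

lemma wt_st:
  assumes "finite V" "x \<notin> S"
  shows "wt V E D (insert x S) v = wt V E D S v + (if x \<in> closed_nbhd V E v then wt V E D S v else 0)"
proof (cases "x \<in> closed_nbhd V E v")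
  case True
  have f: "finite (closed_nbhd V E v - S)" using cn_fin[OF assms(1)] by auto
  have xin: "x \<in> closed_nbhd V E v - S" using True assms by auto
  have eq: "closed_nbhd V E v - insert x S = (closed_nbhd V E v - S) - {x}" by auto
  define k where "k = card (closed_nbhd V E v - S)"
  have k1: "k \<ge> 1" using f xin k_def card_0_eq by fastforce
  have c: "card (closed_nbhd V E v - insert x S) = k - 1" using eq f xin k_def by simp
  have "(1/2::real) ^ (k - 1) = 2 * (1/2) ^ k"
  proof -
    obtain j where "k = Suc j" using k1 by (cases k) auto
    then show ?thesis by simp
  qed
  then show ?thesis using True c k_def by (auto simp: wt_def)
next
  case False
  have "closed_nbhd V E v - insert x S = closed_nbhd V E v - S" using False by auto
  then show ?thesis using False by (simp add: wt_def)
qed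

lemma pot_dom: "pot V E (insert y D) S = pot V E D S - gain V E D S y"
  unfolding pot_def gain_def by (simp add: wt_dom[of V E y D S] sum_subtractf)

lemma pot_st: "finite V \<Longrightarrow> x \<notin> S \<Longrightarrow> pot V E D (insert x S) = pot V E D S + gain V E D S x"
  unfolding pot_def gain_def by (simp add: wt_st sum.distrib)

lemma gain_mono: "gain V E (insert y D) S x \<le> gain V E D S x"
  unfolding gain_def by (rule sum_mono) (simp add: wt_dom_le)

lemma gain_le_pot: "gain V E D S x \<le> pot V E D S"
  unfolding gain_def pot_def by (rule sum_mono) (simp add: wt_nonneg)

lemma final_dom:
  assumes "finite V" "D \<union> S = V" "pot V E D S < 1"
  shows "dominating V E D"
  unfolding dominating_def
proof (intro conjI ballI)
  show "D \<subseteq> V" using assms by auto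
next
  fix v assume v: "v \<in> V"
  show "closed_nbhd V E v \<inter> D \<noteq> {}"
  proof
    assume h: "closed_nbhd V E v \<inter> D = {}"
    have "closed_nbhd V E v - S = {}" using h cn_sub[OF v, of E] assms(2) by auto
    then have "card (closed_nbhd V E v - S) = 0" by (simp only: card.empty)
    then have "wt V E D S v = 1" using h unfolding wt_def by simp
    moreover have "wt V E D S v \<le> pot V E D S" unfolding pot_def
      by (rule member_le_sum) (use v assms wt_nonneg in auto)
    ultimately show False using assms by simp
  qed
qed

lemma main:
  assumes fin: "finite V"
  shows "card (V - (D \<union> S)) = n \<Longrightarrow> D \<union> S \<subseteq> V \<Longrightarrow> pot V E D S < 1 \<Longrightarrow> dom_wins V E D S Dominator"
proof (induction n arbitrary: D S rule: less_induct)
  case (less n)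
  define F where "F = V - (D \<union> S)"
  show ?case
  proof (cases "F = {}")
    case True
    then have "D \<union> S = V" using less.prems F_def by auto
    then show ?thesis using final_dom[OF fin] less.prems by (auto intro: dom_wins.finished)
  next
    case False
    have fF: "finite F" using fin F_def by auto
    define M where "M = Max (gain V E D S ` F)"
    have "M \<in> gain V E D S ` F" unfolding M_def using fF False by (intro Max_in) auto
    then obtain y where y: "y \<in> F" "gain V E D S y = M" by auto
    have ymax: "\<And>z. z \<in> F \<Longrightarrow> gain V E D S z \<le> gain V E D S y"
      using y fF M_def by auto
    have p1: "pot V E (insert y D) S \<le> pot V E D S"
      using pot_dom[of V E y D S] gain_nonneg[of V E D S y] by simp
    have "dom_wins V E (insert y D) S Staller"
    proof (cases "V - (insert y D \<union> S) = {}")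
      case True
      then have "insert y D \<union> S = V" using less.prems y F_def by auto
      then show ?thesis using final_dom[OF fin] p1 less.prems
        by (auto intro: dom_wins.finished)
    next
      case False2: False
      show ?thesis
      proof (rule dom_wins.staller_move[OF False2], intro ballI)
        fix x assume x: "x \<in> V - (insert y D \<union> S)"
        have xF: "x \<in> F" using x F_def by auto
        have "pot V E (insert y D) (insert x S) = pot V E (insert y D) S + gain V E (insert y D) S x"
          using pot_st[OF fin, of x S E "insert y D"] x by auto
        also have "\<dots> \<le> pot V E D S - gain V E D S y + gain V E D S x"
          using pot_dom[of V E y D S] gain_mono[of V E y D S x] by simp
        also have "\<dots> \<le> pot V E D S" using ymax[OF xF] by simp
        finally have pb: "pot V E (insert y D) (insert x S) < 1" using less.prems by simp
        have eqF: "V - (insert y D \<union> insert x S) = F - {y} - {x}" using F_def by auto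
        have "card (F - {y} - {x}) < card F"
        proof -
          have "card (F - {y} - {x}) \<le> card (F - {y})" using fF by (intro card_mono) auto
          also have "\<dots> < card F" using fF y(1) by (rule card_Diff1_less)
          finally show ?thesis .
        qed
        then have lt: "card (V - (insert y D \<union> insert x S)) < n" using eqF less.prems F_def by simp
        show "dom_wins V E (insert y D) (insert x S) Dominator"
          using less.IH[OF lt refl] x y F_def less.prems pb by auto
      qed
    qed
    then show ?thesis using y F_def by (auto intro: dom_wins.dom_move)
  qed
qed

theorem proposition3:
  fixes V :: "'a set" and E :: "'a \<Rightarrow> 'a \<Rightarrow> bool"
  assumes "simple_graph V E"
    and "card V < 2 ^ min_degree V E"
  shows "dominator_wins_second V E"
proof (cases "V = {}")
  case True
  then show ?thesis unfolding dominator_wins_second_def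
    by (auto intro: dom_wins.finished simp: dominating_def)
next
  case False
  have fin: "finite V" using assms(1) by (simp add: simple_graph_def)
  define d where "d = min_degree V E"
  have wv: "wt V E {} {} v \<le> (1/2) ^ Suc d" if v: "v \<in> V" for v
  proof -
    have "d \<le> degree V E v" unfolding d_def min_degree_def using fin v by simp
    moreover have "v \<notin> nbhd V E v" using assms(1) by (simp add: nbhd_def simple_graph_def)
    moreover have "finite (nbhd V E v)" using fin by (simp add: nbhd_def)
    ultimately have "card (closed_nbhd V E v) \<ge> Suc d"
      by (simp add: closed_nbhd_def degree_def)
    then have "(1/2::real) ^ card (closed_nbhd V E v) \<le> (1/2) ^ Suc d"
      by (intro power_decreasing) auto
    then show ?thesis unfolding wt_def by simp
  qed
  have "pot V E {} {} \<le> (\<Sum>v\<in>V. (1/2::real) ^ Suc d)"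
    unfolding pot_def by (rule sum_mono) (use wv in auto)
  also have "\<dots> = real (card V) * (1/2) ^ Suc d" by simp
  finally have p0: "pot V E {} {} \<le> real (card V) * (1/2) ^ Suc d" .
  have cv: "real (card V) < 2 ^ d" using assms(2) d_def
    by (metis of_nat_less_iff of_nat_numeral of_nat_power)
  have "real (card V) * (1/2) ^ d < 1"
    using cv by (simp add: power_one_over field_simps)
  then have p0': "2 * pot V E {} {} < 1" using p0 by simp
  show ?thesis unfolding dominator_wins_second_def
  proof (rule dom_wins.staller_move)
    show "V - ({} \<union> {}) \<noteq> {}" using False by simp
  next
    show "\<forall>v\<in>V - ({} \<union> {}). dom_wins V E {} (insert v {}) Dominator"
    proof
      fix x assume x: "x \<in> V - ({} \<union> {})"
      have "pot V E {} {x} = pot V E {} {} + gain V E {} {} x"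
        using pot_st[OF fin, of x "{}" E "{}"] by simp
      also have "\<dots> \<le> 2 * pot V E {} {}" using gain_le_pot[of V E "{}" "{}" x] by simp
      finally have "pot V E {} {x} < 1" using p0' by simp
      then show "dom_wins V E {} (insert x {}) Dominator"
        using main[OF fin refl] x by auto
    qed
  qed
qed

end
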